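(* Let $\mathbb{X}$ be a nonempty finite set of points in $\mathbb{P}^1\times\mathbb{P}^1$ and let $\mathcal{G}(I_{\mathbb{X}})=\{g_1,\dots,g_r\}$ be a minimal set of bihomogeneous generators of $I_{\mathbb{X}}$. Then there is no partition $\mathcal{G}(I_{\mathbb{X}})=A\sqcup B$ with $A\neq\emptyset$ and $B\neq\emptyset$ such that both $J=\langle A\rangle$ and $K=\langle B\rangle$ are defining ideals of (finite) sets of points in $\mathbb{P}^1\times\mathbb{P}^1$.
   Context: $R=\mathbb{C}[x_0,x_1,y_0,y_1]$ is bigraded with $\deg x_i=(1,0)$, $\deg y_i=(0,1)$. For a point $P=A\times B$ with $A=[a_0:a_1]$, $B=[b_0:b_1]$, $I_P=\langle a_1x_0-a_0x_1,\ b_1y_0-b_0y_1\rangle$; for a finite set $\mathbb{X}$ of points, $I_{\mathbb{X}}=\bigcap_{P\in\mathbb{X}}I_P$ (the defining ideal of $\mathbb{X}$). *)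

theory Defs
  imports Complex_Main "HOL-Library.Poly_Mapping"
begin

datatype var = X0 | X1 | Y0 | Y1

type_synonym poly4 = "(var \<Rightarrow>\<^sub>0 nat) \<Rightarrow>\<^sub>0 complex"

definition Var :: "var \<Rightarrow> poly4" where
  "Var v = Poly_Mapping.single (Poly_Mapping.single v 1) 1"

definition Const :: "complex \<Rightarrow> poly4" where
  "Const c = Poly_Mapping.single 0 c"

definition bideg :: "(var \<Rightarrow>\<^sub>0 nat) \<Rightarrow> nat \<times> nat" where
  "bideg m = (Poly_Mapping.lookup m X0 + Poly_Mapping.lookup m X1, Poly_Mapping.lookup m Y0 + Poly_Mapping.lookup m Y1)"

definition bihomogeneous :: "poly4 \<Rightarrow> bool" where
  "bihomogeneous f \<longleftrightarrow> (\<exists>d. \<forall>m \<in> Poly_Mapping.keys f. bideg m = d)"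

definition ideal_gen :: "poly4 set \<Rightarrow> poly4 set" where
  "ideal_gen S = {(\<Sum>g\<in>F. c g * g) | F c. finite F \<and> F \<subseteq> S}"

text \<open>A point A x B of P^1 x P^1, represented by ((a0,a1),(b0,b1)) with both
  coordinate pairs nonzero.\<close>
definition valid_point :: "(complex \<times> complex) \<times> (complex \<times> complex) \<Rightarrow> bool" where
  "valid_point P \<longleftrightarrow> fst P \<noteq> (0,0) \<and> snd P \<noteq> (0,0)"

definition point_ideal :: "(complex \<times> complex) \<times> (complex \<times> complex) \<Rightarrow> poly4 set" where
  "point_ideal P = (case P of ((a0,a1),(b0,b1)) \<Rightarrow>
     ideal_gen {Const a1 * Var X0 - Const a0 * Var X1, Const b1 * Var Y0 - Const b0 * Var Y1})"

definition points_ideal :: "((complex \<times> complex) \<times> (complex \<times> complex)) set \<Rightarrow> poly4 set" where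
  "points_ideal X = (\<Inter>P\<in>X. point_ideal P)"

definition is_points_ideal :: "poly4 set \<Rightarrow> bool" where
  "is_points_ideal J \<longleftrightarrow> (\<exists>Y. finite Y \<and> Y \<noteq> {} \<and> (\<forall>P\<in>Y. valid_point P) \<and> J = points_ideal Y)"

definition minimal_bihom_generators :: "poly4 set \<Rightarrow> poly4 set \<Rightarrow> bool" where
  "minimal_bihom_generators G I \<longleftrightarrow> finite G \<and> (\<forall>g\<in>G. bihomogeneous g) \<and>
     ideal_gen G = I \<and> (\<forall>H. H \<subset> G \<longrightarrow> ideal_gen H \<noteq> I)"

end

theory Submission
  imports Defs "HOL-Computational_Algebra.Polynomial"
begin

abbreviation "lk \<equiv> Poly_Mapping.lookup"
abbreviation "ks \<equiv> Poly_Mapping.keys"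
abbreviation "sg \<equiv> Poly_Mapping.single"

definition mev :: "(var \<Rightarrow> 'b::comm_ring_1) \<Rightarrow> (var \<Rightarrow>\<^sub>0 nat) \<Rightarrow> 'b" where
  "mev \<sigma> m = \<sigma> X0 ^ lk m X0 * \<sigma> X1 ^ lk m X1 * \<sigma> Y0 ^ lk m Y0 * \<sigma> Y1 ^ lk m Y1"

definition ev :: "(complex \<Rightarrow> 'b::comm_ring_1) \<Rightarrow> (var \<Rightarrow> 'b) \<Rightarrow> poly4 \<Rightarrow> 'b" where
  "ev \<phi> \<sigma> p = (\<Sum>m\<in>ks p. \<phi> (lk p m) * mev \<sigma> m)"

definition hom :: "(complex \<Rightarrow> 'b::comm_ring_1) \<Rightarrow> bool" where
  "hom \<phi> \<longleftrightarrow> \<phi> 0 = 0 \<and> \<phi> 1 = 1 \<and> (\<forall>a b. \<phi> (a+b) = \<phi> a + \<phi> b) \<and> (\<forall>a b. \<phi> (a*b) = \<phi> a * \<phi> b)"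

lemma mev_add: "mev \<sigma> (a + b) = mev \<sigma> a * mev \<sigma> b"
  by (simp add: mev_def lookup_add power_add algebra_simps)

lemma mev_zero[simp]: "mev \<sigma> 0 = 1"
  by (simp add: mev_def)

lemma ev_superset:
  assumes "hom \<phi>" "finite S" "ks p \<subseteq> S"
  shows "ev \<phi> \<sigma> p = (\<Sum>m\<in>S. \<phi> (lk p m) * mev \<sigma> m)"
  unfolding ev_def
  apply (rule sum.mono_neutral_left)
  using assms by (auto simp: hom_def in_keys_iff)

lemma ev_zero[simp]: "ev \<phi> \<sigma> 0 = 0"
  by (simp add: ev_def)

lemma ev_add:
  assumes "hom \<phi>"
  shows "ev \<phi> \<sigma> (p + q) = ev \<phi> \<sigma> p + ev \<phi> \<sigma> q"
proof -
  let ?S = "ks p \<union> ks q"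
  have "ev \<phi> \<sigma> (p + q) = (\<Sum>m\<in>?S. \<phi> (lk (p+q) m) * mev \<sigma> m)"
    using keys_add[of p q] by (intro ev_superset assms) auto
  also have "\<dots> = (\<Sum>m\<in>?S. \<phi> (lk p m) * mev \<sigma> m) + (\<Sum>m\<in>?S. \<phi> (lk q m) * mev \<sigma> m)"
    using assms by (simp add: lookup_add hom_def algebra_simps sum.distrib)
  also have "\<dots> = ev \<phi> \<sigma> p + ev \<phi> \<sigma> q"
    using ev_superset[OF assms, of "?S" p \<sigma>] ev_superset[OF assms, of "?S" q \<sigma>] by simp
  finally show ?thesis .
qed

lemma ev_sum:
  assumes "hom \<phi>"
  shows "ev \<phi> \<sigma> (sum f A) = (\<Sum>a\<in>A. ev \<phi> \<sigma> (f a))"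
  by (induction A rule: infinite_finite_induct) (auto simp: ev_add assms)

lemma ev_uminus:
  assumes "hom \<phi>"
  shows "ev \<phi> \<sigma> (- p) = - ev \<phi> \<sigma> p"
proof -
  have "ev \<phi> \<sigma> (- p) + ev \<phi> \<sigma> p = 0" using ev_add[OF assms, where p="-p" and q=p and \<sigma>=\<sigma>] by simp
  then show ?thesis by (simp add: eq_neg_iff_add_eq_0)
qed

lemma ev_diff:
  assumes "hom \<phi>"
  shows "ev \<phi> \<sigma> (p - q) = ev \<phi> \<sigma> p - ev \<phi> \<sigma> q"
  using ev_add[OF assms, where p=p and q="-q" and \<sigma>=\<sigma>] ev_uminus[OF assms, where p=q and \<sigma>=\<sigma>] by simp

lemma ev_single:
  assumes "hom \<phi>"
  shows "ev \<phi> \<sigma> (sg m c) = \<phi> c * mev \<sigma> m"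
  using assms by (simp add: ev_def hom_def)

lemma poly_expand: "p = (\<Sum>m\<in>ks (p::poly4). sg m (lk p m))"
  by (rule poly_mapping_eqI) (simp add: lookup_sum lookup_single when_def in_keys_iff sum.delta' Sum_any.delta)

lemma ev_mult:
  assumes "hom \<phi>"
  shows "ev \<phi> \<sigma> (p * q) = ev \<phi> \<sigma> p * ev \<phi> \<sigma> q"
proof -
  have "p * q = (\<Sum>m\<in>ks p. sg m (lk p m)) * (\<Sum>n\<in>ks q. sg n (lk q n))"
    using poly_expand[of p] poly_expand[of q] by simp
  also have "\<dots> = (\<Sum>m\<in>ks p. \<Sum>n\<in>ks q. sg (m+n) (lk p m * lk q n))"
    by (simp add: sum_distrib_left sum_distrib_right mult_single) (rule sum.swap)
  finally have "ev \<phi> \<sigma> (p * q) = (\<Sum>m\<in>ks p. \<Sum>n\<in>ks q. (\<phi> (lk p m) * mev \<sigma> m) * (\<phi> (lk q n) * mev \<sigma> n))"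
    using assms by (simp add: ev_sum ev_single mev_add hom_def algebra_simps)
  also have "\<dots> = ev \<phi> \<sigma> p * ev \<phi> \<sigma> q"
    by (simp add: ev_def sum_distrib_left sum_distrib_right) (rule sum.swap)
  finally show ?thesis .
qed

lemma ev_one:
  assumes "hom \<phi>"
  shows "ev \<phi> \<sigma> 1 = 1"
  using ev_single[OF assms, of \<sigma> 0 1] assms by (simp add: hom_def flip: single_one)

lemma ev_prod:
  assumes "hom \<phi>"
  shows "ev \<phi> \<sigma> (prod f A) = (\<Prod>a\<in>A. ev \<phi> \<sigma> (f a))"
  by (induction A rule: infinite_finite_induct) (auto simp: ev_mult assms ev_one)

lemma hom_id: "hom id" by (simp add: hom_def)
lemma hom_pC: "hom (\<lambda>c. [:c:])" by (simp add: hom_def)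


lemma ig_single: "g \<in> S \<Longrightarrow> r * g \<in> ideal_gen S"
  unfolding ideal_gen_def
  by (rule CollectI, rule exI[of _ "{g}"], rule exI[of _ "\<lambda>_. r"]) auto

lemma ig_zero: "0 \<in> ideal_gen S"
  unfolding ideal_gen_def by (rule CollectI, rule exI[of _ "{}"]) auto

lemma ig_add:
  assumes "f \<in> ideal_gen S" "h \<in> ideal_gen S"
  shows "f + h \<in> ideal_gen S"
proof -
  obtain F c where F: "f = (\<Sum>g\<in>F. c g * g)" "finite F" "F \<subseteq> S"
    using assms(1) unfolding ideal_gen_def by blast
  obtain H d where H: "h = (\<Sum>g\<in>H. d g * g)" "finite H" "H \<subseteq> S"
    using assms(2) unfolding ideal_gen_def by blast
  define e where "e g = (if g \<in> F then c g else 0) + (if g \<in> H then d g else 0)" for g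
  have "(\<Sum>g\<in>F \<union> H. e g * g) = (\<Sum>g\<in>F \<union> H. (if g \<in> F then c g * g else 0)) + (\<Sum>g\<in>F \<union> H. (if g \<in> H then d g * g else 0))"
    unfolding sum.distrib[symmetric] by (rule sum.cong) (auto simp: e_def algebra_simps)
  also have "\<dots> = f + h"
    using F H by (simp add: sum.If_cases Int_absorb1 Int_absorb2)
  finally show ?thesis unfolding ideal_gen_def mem_Collect_eq
    by (intro exI[of _ "F \<union> H"] exI[of _ e]) (use F H in simp)
qed

lemma ig_mult:
  assumes "f \<in> ideal_gen S"
  shows "r * f \<in> ideal_gen S"
proof -
  obtain F c where F: "f = (\<Sum>g\<in>F. c g * g)" "finite F" "F \<subseteq> S"
    using assms(1) unfolding ideal_gen_def by blast
  have "r * f = (\<Sum>g\<in>F. (r * c g) * g)" using F by (simp add: sum_distrib_left mult.assoc)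
  then show ?thesis unfolding ideal_gen_def mem_Collect_eq
    by (intro exI[of _ F] exI[of _ "\<lambda>g. r * c g"]) (use F in simp)
qed

lemma ig_sum:
  assumes "\<And>a. a \<in> A \<Longrightarrow> f a \<in> ideal_gen S"
  shows "sum f A \<in> ideal_gen S"
  using assms by (induction A rule: infinite_finite_induct) (auto simp: ig_zero intro!: ig_add)

lemma ig_subset:
  assumes "S \<subseteq> ideal_gen T"
  shows "ideal_gen S \<subseteq> ideal_gen T"
proof
  fix f assume "f \<in> ideal_gen S"
  then obtain F c where F: "f = (\<Sum>g\<in>F. c g * g)" "finite F" "F \<subseteq> S"
    unfolding ideal_gen_def by blast
  show "f \<in> ideal_gen T" unfolding F(1)
    by (rule ig_sum, rule ig_mult) (use F assms in auto)
qed

lemma ig_base: "g \<in> S \<Longrightarrow> g \<in> ideal_gen S"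
  using ig_single[of g S 1] by simp

lemma ig_mono: "S \<subseteq> T \<Longrightarrow> ideal_gen S \<subseteq> ideal_gen T"
  by (rule ig_subset) (auto intro: ig_base)

lemma ig_vanish:
  assumes "hom \<phi>" "f \<in> ideal_gen S" "\<And>g. g \<in> S \<Longrightarrow> ev \<phi> \<sigma> g = 0"
  shows "ev \<phi> \<sigma> f = 0"
proof -
  obtain F c where F: "f = (\<Sum>g\<in>F. c g * g)" "finite F" "F \<subseteq> S"
    using assms(2) unfolding ideal_gen_def by blast
  show ?thesis using F assms(3) by (simp add: ev_sum[OF assms(1)] ev_mult[OF assms(1)] subset_iff)
qed

lemma mev_single: "mev \<sigma> (sg v 1) = \<sigma> v"
  by (cases v) (auto simp: mev_def lookup_single when_def)

lemma ev_Var: "hom \<phi> \<Longrightarrow> ev \<phi> \<sigma> (Var v) = \<sigma> v"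
  using mev_single[of \<sigma> v] by (simp add: Var_def ev_single hom_def)

lemma ev_Const: "hom \<phi> \<Longrightarrow> ev \<phi> \<sigma> (Const c) = \<phi> c"
  by (simp add: Const_def ev_single)

definition sigP :: "(complex \<times> complex) \<times> (complex \<times> complex) \<Rightarrow> var \<Rightarrow> complex" where
  "sigP P v = (case P of ((a0,a1),(b0,b1)) \<Rightarrow> (case v of X0 \<Rightarrow> a0 | X1 \<Rightarrow> a1 | Y0 \<Rightarrow> b0 | Y1 \<Rightarrow> b1))"

lemma point_ideal_vanish:
  assumes "f \<in> point_ideal P"
  shows "ev id (sigP P) f = 0"
proof -
  obtain a0 a1 b0 b1 where P: "P = ((a0,a1),(b0,b1))" by (metis prod.collapse)
  show ?thesis
    using assms unfolding P point_ideal_def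
    apply (simp)
    apply (erule ig_vanish[OF hom_id])
    apply (erule insertE; simp add: ev_diff[OF hom_id] ev_mult[OF hom_id] ev_Var[OF hom_id] ev_Const[OF hom_id] sigP_def)
    done
qed


definition xh :: "nat \<Rightarrow> poly4 \<Rightarrow> bool" where
  "xh k p \<longleftrightarrow> (\<forall>m\<in>ks p. lk m Y0 = 0 \<and> lk m Y1 = 0 \<and> lk m X0 + lk m X1 = k)"

definition Xm :: "nat \<Rightarrow> nat \<Rightarrow> var \<Rightarrow>\<^sub>0 nat" where
  "Xm i j = sg X0 i + sg X1 j"

definition sigU :: "var \<Rightarrow> complex poly" where
  "sigU v = (case v of X0 \<Rightarrow> [:0,1:] | _ \<Rightarrow> 1)"

definition Ux :: "poly4 \<Rightarrow> complex poly" where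
  "Ux = ev (\<lambda>c. [:c:]) sigU"

lemma lk_Xm[simp]: "lk (Xm i j) X0 = i" "lk (Xm i j) X1 = j" "lk (Xm i j) Y0 = 0" "lk (Xm i j) Y1 = 0"
  by (simp_all add: Xm_def lookup_add lookup_single when_def)

lemma Xm_inj: "Xm i j = Xm i' j' \<longleftrightarrow> i = i' \<and> j = j'"
  by (metis lk_Xm(1,2))

lemma mev_sigU: "mev sigU m = [:0,1:] ^ lk m X0"
  by (simp add: mev_def sigU_def)

lemma coeff_cx: "coeff ([:c:] * [:0,1:] ^ n) i = (if n = i then c else 0)"
  by (simp add: monom_altdef[symmetric] coeff_monom)

lemma xpow_monom: "[:0,1:] ^ n = (monom 1 n :: complex poly)"
  by (simp add: monom_altdef)

lemma coeff_Ux: "coeff (Ux p) i = (\<Sum>m\<in>ks p. if lk m X0 = i then lk p m else 0)"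
  by (simp add: Ux_def ev_def coeff_sum mev_sigU xpow_monom coeff_monom if_distrib cong: if_cong)

lemma xh_key:
  assumes "xh k p" "m \<in> ks p"
  shows "m = Xm (lk m X0) (k - lk m X0) \<and> lk m X0 \<le> k"
proof -
  have h: "lk m Y0 = 0" "lk m Y1 = 0" "lk m X0 + lk m X1 = k" using assms unfolding xh_def by auto
  have "m = Xm (lk m X0) (k - lk m X0)"
  proof (rule poly_mapping_eqI)
    fix v show "lk m v = lk (Xm (lk m X0) (k - lk m X0)) v"
      using h by (cases v) auto
  qed
  then show ?thesis using h by auto
qed

lemma coeff_Ux_xh:
  assumes "xh k p"
  shows "coeff (Ux p) i = (if i \<le> k then lk p (Xm i (k - i)) else 0)"
proof -
  have "coeff (Ux p) i = (\<Sum>m\<in>ks p. if m = Xm i (k - i) \<and> i \<le> k then lk p m else 0)"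
    unfolding coeff_Ux
  proof (rule sum.cong)
    fix m assume m: "m \<in> ks p"
    from xh_key[OF assms m] show "(if lk m X0 = i then lk p m else 0) = (if m = Xm i (k - i) \<and> i \<le> k then lk p m else 0)"
      by (metis lk_Xm(1))
  qed simp
  also have "\<dots> = (if i \<le> k then lk p (Xm i (k - i)) else 0)"
    by (auto simp: sum.delta' in_keys_iff)
  finally show ?thesis .
qed

lemma Ux_inj:
  assumes "xh k p" "xh k q" "Ux p = Ux q"
  shows "p = q"
proof (rule poly_mapping_eqI)
  fix m
  show "lk p m = lk q m"
  proof (cases "m \<in> ks p \<union> ks q")
    case True
    then have "m = Xm (lk m X0) (k - lk m X0) \<and> lk m X0 \<le> k"
      using xh_key assms(1,2) by blast
    moreover have "coeff (Ux p) (lk m X0) = coeff (Ux q) (lk m X0)" using assms(3) by simp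
    ultimately show ?thesis using coeff_Ux_xh[OF assms(1)] coeff_Ux_xh[OF assms(2)] by metis
  next
    case False then show ?thesis by (simp add: in_keys_iff)
  qed
qed

lemma deg_Ux: "xh k p \<Longrightarrow> degree (Ux p) \<le> k"
  by (rule degree_le) (simp add: coeff_Ux_xh)

lemma xh_zero[simp]: "xh k 0" by (simp add: xh_def)
lemma xh_one: "xh 0 1" by (simp add: xh_def)

lemma xh_mult: "xh k p \<Longrightarrow> xh l q \<Longrightarrow> xh (k + l) (p * q)"
  unfolding xh_def
  using keys_mult[of p q] by (fastforce simp: lookup_add)

lemma xh_prod: "finite A \<Longrightarrow> (\<And>a. a \<in> A \<Longrightarrow> xh (d a) (f a)) \<Longrightarrow> xh (sum d A) (prod f A)"
  by (induction A rule: finite_induct) (auto simp: xh_one intro: xh_mult)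

lemma xh_add: "xh k p \<Longrightarrow> xh k q \<Longrightarrow> xh k (p + q)"
  unfolding xh_def using keys_add[of p q] by blast

lemma xh_uminus: "xh k p \<Longrightarrow> xh k (- p)"
  unfolding xh_def by (simp add: in_keys_iff)

lemma xh_diff: "xh k p \<Longrightarrow> xh k q \<Longrightarrow> xh k (p - q)"
  using xh_add[of k p "-q"] xh_uminus[of k q] by simp

lemma xh_sum: "(\<And>a. a \<in> A \<Longrightarrow> xh k (f a)) \<Longrightarrow> xh k (sum f A)"
  by (induction A rule: infinite_finite_induct) (auto intro: xh_add)

definition homk :: "nat \<Rightarrow> complex poly \<Rightarrow> poly4" where
  "homk k r = (\<Sum>i\<le>k. sg (Xm i (k - i)) (coeff r i))"

lemma xh_homk: "xh k (homk k r)"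
  unfolding homk_def by (rule xh_sum) (auto simp: xh_def split: if_splits)

lemma lk_homk: "i \<le> k \<Longrightarrow> lk (homk k r) (Xm i (k - i)) = coeff r i"
proof -
  assume i: "i \<le> k"
  have "lk (homk k r) (Xm i (k - i)) = (\<Sum>j\<le>k. if j = i then coeff r i else 0)"
    unfolding homk_def lookup_sum
    by (rule sum.cong) (auto simp: lookup_single when_def Xm_inj)
  then show ?thesis using i by simp
qed

lemma Ux_homk: "degree r \<le> k \<Longrightarrow> Ux (homk k r) = r"
  by (rule poly_eqI) (auto simp: coeff_Ux_xh[OF xh_homk] lk_homk coeff_eq_0)

lemma ev_xh:
  assumes "xh k p"
  shows "ev id (sigP ((a0,a1),bs)) p = (\<Sum>m\<in>ks p. lk p m * a0 ^ lk m X0 * a1 ^ (k - lk m X0))"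
  unfolding ev_def
proof (rule sum.cong)
  fix m assume m: "m \<in> ks p"
  have h: "lk m Y0 = 0" "lk m Y1 = 0" "lk m X1 = k - lk m X0" using assms m unfolding xh_def by auto
  obtain b0 b1 where "bs = (b0,b1)" by fastforce
  then show "id (lk p m) * mev (sigP ((a0, a1), bs)) m = lk p m * a0 ^ lk m X0 * a1 ^ (k - lk m X0)"
    using h by (simp add: mev_def sigP_def)
qed simp

lemma poly_Ux: "poly (Ux p) x = (\<Sum>m\<in>ks p. lk p m * x ^ lk m X0)"
  by (simp add: Ux_def ev_def poly_sum mev_sigU poly_power)

lemma ev_xh_fin:
  assumes "xh k p" "a1 \<noteq> 0"
  shows "ev id (sigP ((a0,a1),bs)) p = a1 ^ k * poly (Ux p) (a0 / a1)"
  unfolding ev_xh[OF assms(1)] poly_Ux sum_distrib_left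
proof (rule sum.cong)
  fix m assume m: "m \<in> ks p"
  have "lk m X0 \<le> k" using xh_key[OF assms(1) m] by simp
  then have "a1 ^ k = a1 ^ lk m X0 * a1 ^ (k - lk m X0)" by (simp flip: power_add)
  then show "lk p m * a0 ^ lk m X0 * a1 ^ (k - lk m X0) = a1 ^ k * (lk p m * (a0 / a1) ^ lk m X0)"
    using assms(2) by (simp add: power_divide field_simps)
qed simp

lemma ev_xh_inf:
  assumes "xh k p"
  shows "ev id (sigP ((a0,0),bs)) p = a0 ^ k * coeff (Ux p) k"
  unfolding ev_xh[OF assms(1)] coeff_Ux sum_distrib_left
proof (rule sum.cong)
  fix m assume m: "m \<in> ks p"
  have "lk m X0 \<le> k" using xh_key[OF assms(1) m] by simp
  then show "lk p m * a0 ^ lk m X0 * 0 ^ (k - lk m X0) = a0 ^ k * (if lk m X0 = k then lk p m else 0)"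
    by auto
qed simp


definition nrm :: "complex \<times> complex \<Rightarrow> complex \<times> complex" where
  "nrm a = (if snd a \<noteq> 0 then (fst a / snd a, 1) else (1, 0))"

definition Lx :: "complex \<times> complex \<Rightarrow> poly4" where
  "Lx n = Const (snd n) * Var X0 - Const (fst n) * Var X1"

definition Nm :: "((complex \<times> complex) \<times> (complex \<times> complex)) set \<Rightarrow> (complex \<times> complex) set" where
  "Nm Y = nrm ` fst ` Y"

definition FF :: "((complex \<times> complex) \<times> (complex \<times> complex)) set \<Rightarrow> poly4" where
  "FF Y = (\<Prod>n\<in>Nm Y. Lx n)"

lemma Const_mult: "Const a * Const b = Const (a * b)"
  by (simp add: Const_def mult_single)

lemma Const_one: "Const 1 = 1" by (simp add: Const_def)

lemma CV: "Const c * Var v = sg (sg v 1) c"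
  by (simp add: Const_def Var_def mult_single)

lemma xh_sgX: "xh 1 (sg (sg X0 1) c)" "xh 1 (sg (sg X1 1) c)"
  by (auto simp: xh_def lookup_single when_def)

lemma xh_Lx: "xh 1 (Lx n)"
  unfolding Lx_def CV by (intro xh_diff xh_sgX)

lemma Ux_Lx: "Ux (Lx n) = [:- fst n, snd n:]"
  unfolding Ux_def Lx_def
  by (simp add: ev_diff[OF hom_pC] ev_mult[OF hom_pC] ev_Var[OF hom_pC] ev_Const[OF hom_pC] sigU_def)

lemma Ux_nrm_nz: "Ux (Lx (nrm a)) \<noteq> 0"
  by (simp add: Ux_Lx nrm_def)

lemma Lx_nrm:
  assumes "(a0, a1) \<noteq> (0,0)"
  shows "\<exists>\<kappa>. Lx (nrm (a0,a1)) = Const \<kappa> * (Const a1 * Var X0 - Const a0 * Var X1)"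
proof (cases "a1 = 0")
  case True
  then have "a0 \<noteq> 0" using assms by simp
  then have "Lx (nrm (a0,a1)) = Const (1/a0) * (Const a1 * Var X0 - Const a0 * Var X1)"
    using True by (simp add: Lx_def nrm_def right_diff_distrib mult.assoc[symmetric] Const_mult)
  then show ?thesis by blast
next
  case False
  then have "Lx (nrm (a0,a1)) = Const (1/a1) * (Const a1 * Var X0 - Const a0 * Var X1)"
    by (simp add: Lx_def nrm_def right_diff_distrib mult.assoc[symmetric] Const_mult Const_one)
  then show ?thesis by blast
qed

lemma FF_mem:
  assumes "finite Y" "\<forall>P\<in>Y. valid_point P"
  shows "FF Y \<in> points_ideal Y"
  unfolding points_ideal_def
proof (rule InterI, clarify)
  fix P assume P: "P \<in> Y"
  obtain a0 a1 b0 b1 where Pd: "P = ((a0,a1),(b0,b1))" by (metis prod.collapse)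
  have v: "(a0,a1) \<noteq> (0,0)" using assms(2) P Pd by (auto simp: valid_point_def)
  obtain \<kappa> where k: "Lx (nrm (a0,a1)) = Const \<kappa> * (Const a1 * Var X0 - Const a0 * Var X1)"
    using Lx_nrm[OF v] by blast
  have n: "nrm (a0,a1) \<in> Nm Y" unfolding Nm_def using P Pd by force
  have fin: "finite (Nm Y)" using assms(1) by (simp add: Nm_def)
  have "FF Y = Lx (nrm (a0,a1)) * (\<Prod>n\<in>Nm Y - {nrm (a0,a1)}. Lx n)"
    unfolding FF_def using prod.remove[OF fin n] by simp
  also have "\<dots> = (Const \<kappa> * (\<Prod>n\<in>Nm Y - {nrm (a0,a1)}. Lx n)) * (Const a1 * Var X0 - Const a0 * Var X1)"
    unfolding k by (simp add: algebra_simps)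
  finally have "FF Y \<in> ideal_gen {Const a1 * Var X0 - Const a0 * Var X1, Const b1 * Var Y0 - Const b0 * Var Y1}"
    by (simp add: ig_single)
  then show "FF Y \<in> point_ideal P" unfolding Pd point_ideal_def by simp
qed

lemma xh_FF: "finite Y \<Longrightarrow> xh (card (Nm Y)) (FF Y)"
  unfolding FF_def using xh_prod[of "Nm Y" "\<lambda>_. 1" Lx] xh_Lx by (simp add: Nm_def)

lemma Ux_FF: "finite Y \<Longrightarrow> Ux (FF Y) \<noteq> 0"
  unfolding FF_def Ux_def ev_prod[OF hom_pC]
  by (auto simp: Nm_def Ux_nrm_nz[unfolded Ux_def])

lemma Ux_zero[simp]: "Ux 0 = 0" by (simp add: Ux_def)

lemma FF_key:
  assumes "finite Y"
  shows "\<exists>m\<in>ks (FF Y). lk m Y0 = 0 \<and> lk m Y1 = 0 \<and> lk m X0 + lk m X1 = card (Nm Y)"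
proof -
  have "FF Y \<noteq> 0" using Ux_FF[OF assms] by auto
  then obtain m where "m \<in> ks (FF Y)" by (meson all_not_in_conv keys_eq_empty)
  then show ?thesis using xh_FF[OF assms] unfolding xh_def by blast
qed


lemma gen_xonly:
  assumes "f \<in> ideal_gen S" "\<forall>g\<in>S. bihomogeneous g" "m \<in> ks f" "lk m Y0 = 0" "lk m Y1 = 0"
  shows "\<exists>g\<in>S. g \<noteq> 0 \<and> (\<exists>k \<le> lk m X0 + lk m X1. xh k g)"
proof -
  obtain F c where F: "f = (\<Sum>g\<in>F. c g * g)" "finite F" "F \<subseteq> S"
    using assms(1) unfolding ideal_gen_def by blast
  have "m \<in> (\<Union>g\<in>F. ks (c g * g))" using assms(3) keys_sum[of "\<lambda>g. c g * g" F] F(1) by auto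
  then obtain g where g: "g \<in> F" "m \<in> ks (c g * g)" by blast
  then obtain a b where ab: "m = a + b" "b \<in> ks g" using keys_mult[of "c g" g] by blast
  have b: "lk b Y0 = 0" "lk b Y1 = 0" "lk b X0 + lk b X1 \<le> lk m X0 + lk m X1"
    using assms(4,5) ab(1) by (auto simp: lookup_add)
  obtain d where d: "\<forall>m'\<in>ks g. bideg m' = d" using assms(2) g(1) F(3) unfolding bihomogeneous_def by blast
  have "xh (lk b X0 + lk b X1) g"
    unfolding xh_def
  proof
    fix m' assume "m' \<in> ks g"
    then have "bideg m' = bideg b" using d ab(2) by simp
    then show "lk m' Y0 = 0 \<and> lk m' Y1 = 0 \<and> lk m' X0 + lk m' X1 = lk b X0 + lk b X1"
      using b by (simp add: bideg_def)
  qed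
  moreover have "g \<noteq> 0" using ab(2) by auto
  ultimately show ?thesis using g(1) F(3) b(3) by blast
qed

definition FinS where "FinS X = {\<alpha>. (\<alpha>, 1) \<in> Nm X}"
definition InfS where "InfS X = ((1, 0) \<in> Nm X)"
definition P0 :: "_ \<Rightarrow> complex poly" where "P0 X = (\<Prod>\<alpha>\<in>FinS X. [:-\<alpha>, 1:])"

lemma roots_dvd:
  assumes "finite A" "\<forall>\<alpha>\<in>A. poly q \<alpha> = 0"
  shows "(\<Prod>\<alpha>\<in>A. [:-\<alpha>, 1:]) dvd (q :: complex poly)"
  using assms
proof (induction A arbitrary: q rule: finite_induct)
  case empty then show ?case by simp
next
  case (insert \<beta> A)
  then obtain q' where q': "q = [:-\<beta>, 1:] * q'" using poly_eq_0_iff_dvd by (metis dvdE insertI1)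
  have "\<forall>\<alpha>\<in>A. poly q' \<alpha> = 0"
  proof
    fix \<alpha> assume "\<alpha> \<in> A"
    then have "poly q \<alpha> = 0" "\<alpha> \<noteq> \<beta>" using insert by auto
    then show "poly q' \<alpha> = 0" using q' by simp
  qed
  then have "(\<Prod>\<alpha>\<in>A. [:-\<alpha>, 1:]) dvd q'" using insert.IH by blast
  moreover have "(\<Prod>\<alpha>\<in>insert \<beta> A. [:-\<alpha>, 1:]) = [:-\<beta>, 1:] * (\<Prod>\<alpha>\<in>A. [:-\<alpha>, 1:])"
    using insert(1,2) by simp
  ultimately show ?case unfolding q' by (metis dvd_refl mult_dvd_mono)
qed

lemma FinS_finite: "finite X \<Longrightarrow> finite (FinS X)"
proof -
  assume "finite X"
  then have "finite (fst ` Nm X)" by (simp add: Nm_def)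
  moreover have "FinS X \<subseteq> fst ` Nm X" unfolding FinS_def by force
  ultimately show ?thesis by (rule finite_subset[rotated])
qed

lemma deg_P0: "finite X \<Longrightarrow> degree (P0 X) = card (FinS X)"
  unfolding P0_def by (subst degree_prod_eq_sum_degree) auto

lemma P0_nz: "P0 X \<noteq> 0"
  unfolding P0_def by (cases "finite (FinS X)") (auto simp: prod_zero_iff)

lemma card_Nm:
  assumes "finite X"
  shows "card (Nm X) = card (FinS X) + (if InfS X then 1 else 0)"
proof -
  have e: "Nm X = (\<lambda>\<alpha>. (\<alpha>, 1)) ` FinS X \<union> (if InfS X then {(1,0)} else {})"
    unfolding FinS_def InfS_def Nm_def by (auto simp: nrm_def split: if_splits)
  have "card (Nm X) = card ((\<lambda>\<alpha>. (\<alpha>, 1::complex)) ` FinS X) + card (if InfS X then {(1::complex,0::complex)} else {})"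
    unfolding e by (rule card_Un_disjoint) (auto simp: FinS_finite assms)
  also have "\<dots> = card (FinS X) + (if InfS X then 1 else 0)"
    by (subst card_image) (auto simp: inj_on_def)
  finally show ?thesis .
qed

lemma struct:
  assumes X: "finite X" "\<forall>P\<in>X. valid_point P"
    and p: "p \<in> points_ideal X" "xh d p" "p \<noteq> 0"
  shows "\<exists>q. Ux p = P0 X * q \<and> q \<noteq> 0 \<and> card (FinS X) + degree q + (if InfS X then 1 else 0) \<le> d"
proof -
  have van: "ev id (sigP P) p = 0" if "P \<in> X" for P
    using p(1) that unfolding points_ideal_def by (auto intro: point_ideal_vanish)
  have nz: "Ux p \<noteq> 0" using Ux_inj[OF p(2) xh_zero[of d]] p(3) by auto
  have rt: "\<forall>\<alpha>\<in>FinS X. poly (Ux p) \<alpha> = 0"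
  proof
    fix \<alpha> assume "\<alpha> \<in> FinS X"
    then obtain P where P: "P \<in> X" "nrm (fst P) = (\<alpha>, 1)" unfolding FinS_def Nm_def by auto
    obtain a0 a1 bs where Pd: "P = ((a0,a1),bs)" by (metis prod.collapse)
    have a1: "a1 \<noteq> 0" "\<alpha> = a0 / a1" using P(2) Pd by (auto simp: nrm_def split: if_splits)
    have "a1 ^ d * poly (Ux p) (a0 / a1) = 0" using van[OF P(1)] ev_xh_fin[OF p(2) a1(1)] Pd by simp
    then show "poly (Ux p) \<alpha> = 0" using a1 by simp
  qed
  obtain q where q: "Ux p = P0 X * q" using roots_dvd[OF FinS_finite[OF X(1)] rt] unfolding P0_def by (elim dvdE)
  have qnz: "q \<noteq> 0" using q nz by auto
  have dq: "degree (Ux p) = card (FinS X) + degree q" using q qnz P0_nz deg_P0[OF X(1)] by (simp add: degree_mult_eq)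
  have dle: "degree (Ux p) \<le> d" using deg_Ux[OF p(2)] .
  have "degree (Ux p) < d" if inf: "InfS X"
  proof -
    obtain P where P: "P \<in> X" "nrm (fst P) = (1, 0)" using inf unfolding InfS_def Nm_def by auto
    obtain a0 a1 bs where Pd: "P = ((a0,a1),bs)" by (metis prod.collapse)
    have a1: "a1 = 0" using P(2) Pd by (auto simp: nrm_def split: if_splits)
    have a0: "a0 \<noteq> 0" using X(2) P(1) Pd a1 by (auto simp: valid_point_def)
    have "a0 ^ d * coeff (Ux p) d = 0" using van[OF P(1)] ev_xh_inf[OF p(2)] Pd a1 by simp
    then have "coeff (Ux p) d = 0" using a0 by simp
    then have "degree (Ux p) \<noteq> d" using nz by auto
    then show ?thesis using dle by simp
  qed
  then show ?thesis using q qnz dq dle by (intro exI[of _ q]) auto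
qed

lemma div_main:
  assumes X: "finite X" "\<forall>P\<in>X. valid_point P"
    and f: "f0 \<in> points_ideal X" "xh k f0" "f0 \<noteq> 0" "k \<le> card (Nm X)"
    and h: "h \<in> points_ideal X" "xh e h"
  shows "\<exists>R. h = f0 * R"
proof (cases "h = 0")
  case True then show ?thesis by (intro exI[of _ 0]) simp
next
  case False
  obtain q0 where q0: "Ux f0 = P0 X * q0" "q0 \<noteq> 0" "card (FinS X) + degree q0 + (if InfS X then 1 else 0) \<le> k"
    using struct[OF X f(1-3)] by blast
  obtain qh where qh: "Ux h = P0 X * qh" "qh \<noteq> 0" "card (FinS X) + degree qh + (if InfS X then 1 else 0) \<le> e"
    using struct[OF X h False] by blast
  have cN: "card (Nm X) = card (FinS X) + (if InfS X then 1 else 0)" using card_Nm[OF X(1)] .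
  have dq0: "degree q0 = 0" and kk: "k = card (Nm X)" using q0(3) f(4) cN by auto
  define c where "c = coeff q0 0"
  have q0c: "q0 = [:c:]" using dq0 c_def by (metis degree_0_id)
  have c: "c \<noteq> 0" using q0(2) q0c by auto
  have ek: "k \<le> e" "degree qh \<le> e - k" using qh(3) kk cN by auto
  define R where "R = homk (e - k) (smult (1/c) qh)"
  have xR: "xh (e - k) R" unfolding R_def by (rule xh_homk)
  have UR: "Ux R = smult (1/c) qh" unfolding R_def by (rule Ux_homk) (use ek in simp)
  have Um: "Ux (f0 * R) = Ux f0 * Ux R" by (simp add: Ux_def ev_mult[OF hom_pC])
  have "Ux (f0 * R) = Ux h"
    unfolding Um UR q0(1) qh(1) q0c
    using c by (simp add: algebra_simps)
  moreover have "xh e (f0 * R)" using xh_mult[OF f(2) xR] ek by simp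
  ultimately have "f0 * R = h" using Ux_inj h(2) by blast
  then show ?thesis by metis
qed


lemma x_gen:
  assumes "ideal_gen S = points_ideal Y" "finite Y" "\<forall>P\<in>Y. valid_point P" "\<forall>g\<in>S. bihomogeneous g"
  shows "\<exists>g\<in>S. g \<noteq> 0 \<and> (\<exists>k \<le> card (Nm Y). xh k g)"
proof -
  obtain m where m: "m \<in> ks (FF Y)" "lk m Y0 = 0" "lk m Y1 = 0" "lk m X0 + lk m X1 = card (Nm Y)"
    using FF_key[OF assms(2)] by blast
  have "FF Y \<in> ideal_gen S" using FF_mem[OF assms(2,3)] assms(1) by simp
  from gen_xonly[OF this assms(4) m(1-3)] show ?thesis using m(4) by simp
qed

theorem lemma3p1:
  fixes X :: "((complex \<times> complex) \<times> (complex \<times> complex)) set"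
    and G :: "poly4 set"
  assumes "finite X" and "X \<noteq> {}" and "\<forall>P\<in>X. valid_point P"
    and "minimal_bihom_generators G (points_ideal X)"
  shows "\<not> (\<exists>A B. A \<union> B = G \<and> A \<inter> B = {} \<and> A \<noteq> {} \<and> B \<noteq> {} \<and>
              is_points_ideal (ideal_gen A) \<and> is_points_ideal (ideal_gen B))"
proof
  assume "\<exists>A B. A \<union> B = G \<and> A \<inter> B = {} \<and> A \<noteq> {} \<and> B \<noteq> {} \<and>
              is_points_ideal (ideal_gen A) \<and> is_points_ideal (ideal_gen B)"
  then obtain A B where AB: "A \<union> B = G" "A \<inter> B = {}" "is_points_ideal (ideal_gen A)" "is_points_ideal (ideal_gen B)"
    by blast
  have G: "finite G" "\<forall>g\<in>G. bihomogeneous g" "ideal_gen G = points_ideal X"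
    "\<And>H. H \<subset> G \<Longrightarrow> ideal_gen H \<noteq> points_ideal X"
    using assms(4) unfolding minimal_bihom_generators_def by auto
  obtain Y where Y: "finite Y" "\<forall>P\<in>Y. valid_point P" "ideal_gen A = points_ideal Y"
    using AB(3) unfolding is_points_ideal_def by blast
  obtain Z where Z: "finite Z" "\<forall>P\<in>Z. valid_point P" "ideal_gen B = points_ideal Z"
    using AB(4) unfolding is_points_ideal_def by blast
  obtain a where a: "a \<in> A" "a \<noteq> 0" "\<exists>k. xh k a"
    using x_gen[OF Y(3,1,2)] G(2) AB(1) by blast
  obtain b where b: "b \<in> B" "b \<noteq> 0" "\<exists>k. xh k b"
    using x_gen[OF Z(3,1,2)] G(2) AB(1) by blast
  obtain f0 k where f0: "f0 \<in> G" "f0 \<noteq> 0" "k \<le> card (Nm X)" "xh k f0"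
    using x_gen[OF G(3) assms(1,3) G(2)] by blast
  have "a \<noteq> b" using a(1) b(1) AB(2) by blast
  then obtain h e where h: "h \<in> G" "h \<noteq> f0" "xh e h"
    using a b AB(1) by blast
  have f0X: "f0 \<in> points_ideal X" using G(3) f0(1) ig_base by blast
  have hX: "h \<in> points_ideal X" using G(3) h(1) ig_base by blast
  obtain R where R: "h = f0 * R" using div_main[OF assms(1,3) f0X f0(4,2,3) hX h(3)] by blast
  have "R * f0 \<in> ideal_gen (G - {h})" using ig_single[of f0 "G - {h}" R] f0(1) h(2) by simp
  then have "h \<in> ideal_gen (G - {h})" using R by (simp add: mult.commute)
  then have "G \<subseteq> ideal_gen (G - {h})"
  proof (intro subsetI)
    fix g assume hh: "h \<in> ideal_gen (G - {h})" and g: "g \<in> G"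
    show "g \<in> ideal_gen (G - {h})"
    proof (cases "g = h")
      case True then show ?thesis using hh by simp
    next
      case False then show ?thesis using g by (intro ig_base) simp
    qed
  qed
  then have "ideal_gen G \<subseteq> ideal_gen (G - {h})" by (rule ig_subset)
  moreover have "ideal_gen (G - {h}) \<subseteq> ideal_gen G" by (rule ig_mono) blast
  ultimately have "ideal_gen (G - {h}) = points_ideal X" using G(3) by blast
  moreover have "G - {h} \<subset> G" using h(1) by blast
  ultimately show False using G(4) by blast
qed

end
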